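(* Let $G$ be an equimatchable graph and let $k$ be an integer with $1<k\leq\nu(G)$. Then $I(G)^{[k]}:I(G)^{[k-1]}=I(G)^{[k]}$.
   Context: A finite simple graph is equimatchable if every maximal (by inclusion) matching is a maximum matching. Vertices are identified with variables of $S=K[x_1,\ldots,x_n]$ ($K$ a field), edges with degree-2 monomials. $I(G)^{[k]}$ is the ideal generated by all products $e_1\cdots e_k$ over $k$-matchings of $G$; $I(G)^{[1]}=I(G)$ is the edge ideal. $\nu(G)$ is the matching number. *)

theory Defs
  imports "HOL-Library.Poly_Mapping"
begin

text \<open>The ring S = K[x_v : v \<in> V] is the subset polys_in V.\<close>

definition Var :: "'v \<Rightarrow> ('v \<Rightarrow>\<^sub>0 nat) \<Rightarrow>\<^sub>0 'k::field" where
  "Var v = Poly_Mapping.single (Poly_Mapping.single v 1) 1"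

definition polys_in :: "'v set \<Rightarrow> (('v \<Rightarrow>\<^sub>0 nat) \<Rightarrow>\<^sub>0 'k::field) set" where
  "polys_in V = {p :: ('v \<Rightarrow>\<^sub>0 nat) \<Rightarrow>\<^sub>0 'k. \<forall>m\<in>Poly_Mapping.keys p. Poly_Mapping.keys m \<subseteq> V}"

definition ideal_gen_in :: "'v set \<Rightarrow> (('v \<Rightarrow>\<^sub>0 nat) \<Rightarrow>\<^sub>0 'k::field) set
    \<Rightarrow> (('v \<Rightarrow>\<^sub>0 nat) \<Rightarrow>\<^sub>0 'k) set" where
  "ideal_gen_in V A = {p. \<exists>F r. finite F \<and> F \<subseteq> A \<and> (\<forall>a\<in>F. r a \<in> polys_in V)
                              \<and> p = (\<Sum>a\<in>F. r a * a)}"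

definition colon_in :: "'v set \<Rightarrow> (('v \<Rightarrow>\<^sub>0 nat) \<Rightarrow>\<^sub>0 'k::field) set
    \<Rightarrow> (('v \<Rightarrow>\<^sub>0 nat) \<Rightarrow>\<^sub>0 'k) set \<Rightarrow> (('v \<Rightarrow>\<^sub>0 nat) \<Rightarrow>\<^sub>0 'k) set" where
  "colon_in V I J = {f \<in> polys_in V. \<forall>g\<in>J. f * g \<in> I}"

definition simple_graph :: "'v set \<Rightarrow> 'v set set \<Rightarrow> bool" where
  "simple_graph V E \<longleftrightarrow> finite V \<and> E \<subseteq> {e. e \<subseteq> V \<and> card e = 2}"

definition matching :: "'v set set \<Rightarrow> 'v set set \<Rightarrow> bool" where
  "matching E M \<longleftrightarrow> M \<subseteq> E \<and> (\<forall>e1\<in>M. \<forall>e2\<in>M. e1 \<noteq> e2 \<longrightarrow> e1 \<inter> e2 = {})"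

definition matching_number :: "'v set set \<Rightarrow> nat" where
  "matching_number E = Max (card ` {M. matching E M})"

definition maximal_matching :: "'v set set \<Rightarrow> 'v set set \<Rightarrow> bool" where
  "maximal_matching E M \<longleftrightarrow> matching E M \<and> (\<forall>M'. matching E M' \<and> M \<subseteq> M' \<longrightarrow> M' = M)"

definition maximum_matching :: "'v set set \<Rightarrow> 'v set set \<Rightarrow> bool" where
  "maximum_matching E M \<longleftrightarrow> matching E M \<and> (\<forall>M'. matching E M' \<longrightarrow> card M' \<le> card M)"

definition equimatchable :: "'v set set \<Rightarrow> bool" where
  "equimatchable E \<longleftrightarrow> (\<forall>M. maximal_matching E M \<longrightarrow> maximum_matching E M)"

definition edge_mono :: "'v set \<Rightarrow> ('v \<Rightarrow>\<^sub>0 nat) \<Rightarrow>\<^sub>0 'k::field" where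
  "edge_mono e = (\<Prod>v\<in>e. Var v)"

definition sq_power :: "'v set \<Rightarrow> 'v set set \<Rightarrow> nat \<Rightarrow> (('v \<Rightarrow>\<^sub>0 nat) \<Rightarrow>\<^sub>0 'k::field) set" where
  "sq_power V E k = ideal_gen_in V {(\<Prod>e\<in>M. edge_mono e) | M. matching E M \<and> card M = k}"

end

theory Submission
  imports Defs
begin


lemma sg_finE: "simple_graph V E \<Longrightarrow> finite E"
  unfolding simple_graph_def by (auto intro: finite_subset[of E "Pow V"])

lemma sg_edge: "simple_graph V E \<Longrightarrow> e \<in> E \<Longrightarrow> finite e \<and> card e = 2 \<and> e \<noteq> {} \<and> e \<subseteq> V"
  unfolding simple_graph_def by (auto intro: finite_subset)

lemma matching_fin: "simple_graph V E \<Longrightarrow> matching E M \<Longrightarrow> finite M"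
  unfolding matching_def using sg_finE[of V E] finite_subset[of M E] by blast

lemma matching_sub: "matching E M \<Longrightarrow> M' \<subseteq> M \<Longrightarrow> matching E M'"
  unfolding matching_def by blast

lemma fin_matchings: "simple_graph V E \<Longrightarrow> finite {M. matching E M}"
  by (rule finite_subset[of _ "Pow E"]) (auto simp: matching_def dest: sg_finE)

lemma card_le_nu: "simple_graph V E \<Longrightarrow> matching E M \<Longrightarrow> card M \<le> matching_number E"
  unfolding matching_number_def using fin_matchings by (intro Max_ge) auto

lemma nu_attained: "simple_graph V E \<Longrightarrow> \<exists>M. matching E M \<and> card M = matching_number E"
proof -
  assume sg: "simple_graph V E"
  have "matching E {}" by (simp add: matching_def)
  hence "matching_number E \<in> card ` {M. matching E M}"
    unfolding matching_number_def using fin_matchings[OF sg] by (intro Max_in) auto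
  thus ?thesis by auto
qed

lemma comb:
  assumes sg: "simple_graph V E" and eq: "equimatchable E"
    and k1: "1 < k" and kn: "k \<le> matching_number E"
    and noQ: "\<not>(\<exists>Q. matching E Q \<and> card Q = k \<and> \<Union>Q \<subseteq> S)"
  shows "\<exists>M'. matching E M' \<and> card M' = k - 1 \<and>
           \<not>(\<exists>P. matching E P \<and> card P = k \<and> \<Union>P \<subseteq> S \<union> \<Union>M')"
proof -
  have "\<exists>N. (matching E N \<and> \<Union>N \<subseteq> S) \<and> (\<forall>N'. matching E N' \<and> \<Union>N' \<subseteq> S \<longrightarrow> card N' \<le> card N)"
  proof (rule ex_has_greatest_nat[where P="\<lambda>N. matching E N \<and> \<Union>N \<subseteq> S" and k="{}" and f=card and b="Suc (matching_number E)"])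
    show "matching E {} \<and> \<Union>{} \<subseteq> S" by (simp add: matching_def)
    show "\<forall>y. matching E y \<and> \<Union>y \<subseteq> S \<longrightarrow> card y < Suc (matching_number E)"
      using card_le_nu[OF sg] by (simp add: less_Suc_eq_le)
  qed
  then obtain N where N: "matching E N" "\<Union>N \<subseteq> S"
    and Nmax: "\<And>N'. matching E N' \<Longrightarrow> \<Union>N' \<subseteq> S \<Longrightarrow> card N' \<le> card N" by blast
  have finN: "finite N" using matching_fin[OF sg N(1)] .
  have tk: "card N < k"
  proof (rule ccontr)
    assume "\<not> card N < k"
    then obtain Q where "Q \<subseteq> N" "card Q = k" by (meson not_less obtain_subset_with_card_n)
    moreover have "matching E Q" using matching_sub[OF N(1)] \<open>Q \<subseteq> N\<close> .
    ultimately show False using noQ N(2) by blast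
  qed
  have "\<exists>M. (matching E M \<and> N \<subseteq> M) \<and> (\<forall>M'. matching E M' \<and> N \<subseteq> M' \<longrightarrow> card M' \<le> card M)"
  proof (rule ex_has_greatest_nat[where P="\<lambda>M. matching E M \<and> N \<subseteq> M" and k=N and f=card and b="Suc (matching_number E)"])
    show "matching E N \<and> N \<subseteq> N" using N by simp
    show "\<forall>y. matching E y \<and> N \<subseteq> y \<longrightarrow> card y < Suc (matching_number E)"
      using card_le_nu[OF sg] by (simp add: less_Suc_eq_le)
  qed
  then obtain M where M: "matching E M" "N \<subseteq> M"
    and Mmax: "\<And>M'. matching E M' \<Longrightarrow> N \<subseteq> M' \<Longrightarrow> card M' \<le> card M" by blast
  have finM: "finite M" using matching_fin[OF sg M(1)] .
  have "maximal_matching E M"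
    unfolding maximal_matching_def
  proof (intro conjI allI impI)
    show "matching E M" by fact
    fix M' assume a: "matching E M' \<and> M \<subseteq> M'"
    hence "card M' \<le> card M" using Mmax M(2) by blast
    moreover have "finite M'" using a matching_fin[OF sg] by blast
    ultimately show "M' = M" using a card_seteq by blast
  qed
  hence maxi: "maximum_matching E M" using eq unfolding equimatchable_def by blast
  obtain Mo where "matching E Mo" "card Mo = matching_number E" using nu_attained[OF sg] by blast
  hence cM: "card M = matching_number E" using maxi card_le_nu[OF sg M(1)]
    unfolding maximum_matching_def by force
  have ME: "M \<subseteq> E" and Mdis: "\<And>e1 e2. e1 \<in> M \<Longrightarrow> e2 \<in> M \<Longrightarrow> e1 \<noteq> e2 \<Longrightarrow> e1 \<inter> e2 = {}"
    using M(1) unfolding matching_def by auto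
  define X where "X = {e\<in>M. e \<inter> S \<noteq> {}}"
  have XM: "X \<subseteq> M" unfolding X_def by auto
  have finX: "finite X" using finM XM finite_subset by blast
  have NX: "N \<subseteq> X"
  proof
    fix e assume "e \<in> N"
    hence eM: "e \<in> M" using M(2) by auto
    hence "e \<noteq> {}" using sg_edge[OF sg] ME by blast
    moreover have "e \<subseteq> S" using N(2) \<open>e \<in> N\<close> by auto
    ultimately show "e \<in> X" unfolding X_def using eM by auto
  qed
  have Xout: "card (e - S) = 1" if "e \<in> X - N" for e
  proof -
    have eM: "e \<in> M" "e \<notin> N" "e \<inter> S \<noteq> {}" using that unfolding X_def by auto
    have ed: "finite e" "card e = 2" using sg_edge[OF sg] eM(1) ME by auto
    have "\<not> e \<subseteq> S"
    proof
      assume eS: "e \<subseteq> S"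
      have "matching E (insert e N)"
        using matching_sub[OF M(1)] eM M(2) by auto
      moreover have "\<Union>(insert e N) \<subseteq> S" using eS N(2) by auto
      ultimately have "card (insert e N) \<le> card N" using Nmax by blast
      thus False using finN eM(2) by simp
    qed
    hence "e - S \<noteq> {}" by auto
    hence c1: "card (e - S) \<ge> 1" using ed(1) by (simp add: Suc_leI card_gt_0_iff)
    have c2: "card (e \<inter> S) \<ge> 1" using eM(3) ed(1) by (simp add: Suc_leI card_gt_0_iff)
    have "card (e \<inter> S) + card (e - S) = card e" using ed(1) by (metis card_Int_Diff inf.commute)
    thus ?thesis using c1 c2 ed(2) by linarith
  qed
  have Pbound: "card P \<le> card N + card W"
    if P: "matching E P" and W: "finite W" and PW: "\<And>e. e \<in> P \<Longrightarrow> \<not> e \<subseteq> S \<Longrightarrow> e \<inter> W \<noteq> {}" for P W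
  proof -
    have finP: "finite P" using matching_fin[OF sg P] .
    define P1 where "P1 = {e\<in>P. e \<subseteq> S}"
    define P2 where "P2 = {e\<in>P. \<not> e \<subseteq> S}"
    have "P = P1 \<union> P2" "P1 \<inter> P2 = {}" unfolding P1_def P2_def by auto
    hence cP: "card P = card P1 + card P2" using finP by (metis card_Un_disjoint finite_Un)
    have "matching E P1" using matching_sub[OF P] unfolding P1_def by auto
    moreover have "\<Union>P1 \<subseteq> S" unfolding P1_def by auto
    ultimately have c1: "card P1 \<le> card N" using Nmax by blast
    define ch where "ch = (\<lambda>e. SOME w. w \<in> e \<inter> W)"
    have chin: "ch e \<in> e \<inter> W" if "e \<in> P2" for e
      using PW that unfolding P2_def ch_def by (metis (no_types, lifting) ex_in_conv mem_Collect_eq someI_ex)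
    have "inj_on ch P2"
    proof (rule inj_onI)
      fix a b assume ab: "a \<in> P2" "b \<in> P2" "ch a = ch b"
      hence "ch a \<in> a \<inter> b" using chin by force
      thus "a = b" using P ab unfolding matching_def P2_def by blast
    qed
    moreover have "ch ` P2 \<subseteq> W" using chin by blast
    ultimately have "card P2 \<le> card W" using W by (simp add: card_inj_on_le)
    thus ?thesis using cP c1 by linarith
  qed
  show ?thesis
  proof (cases "k - 1 \<le> card X")
    case True
    have "card (X - N) = card X - card N" using NX finN by (simp add: card_Diff_subset)
    hence "k - 1 - card N \<le> card (X - N)" using True by linarith
    then obtain Y where Y: "Y \<subseteq> X - N" "card Y = k - 1 - card N"
      by (rule obtain_subset_with_card_n)
    define M' where "M' = N \<union> Y"
    have finY: "finite Y" using Y(1) finX finite_subset by blast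
    have "N \<inter> Y = {}" using Y(1) by blast
    hence "card M' = card N + card Y" unfolding M'_def using finN finY by (rule card_Un_disjoint[rotated 2])
    hence cM': "card M' = k - 1" using Y(2) tk by linarith
    have "M' \<subseteq> M" using M(2) Y(1) XM unfolding M'_def by blast
    hence mM': "matching E M'" by (rule matching_sub[OF M(1)])
    have noP: "\<not>(\<exists>P. matching E P \<and> card P = k \<and> \<Union>P \<subseteq> S \<union> \<Union>M')"
    proof
      assume "\<exists>P. matching E P \<and> card P = k \<and> \<Union>P \<subseteq> S \<union> \<Union>M'"
      then obtain P where P: "matching E P" "card P = k" "\<Union>P \<subseteq> S \<union> \<Union>M'" by blast
      define W where "W = (\<Union>e\<in>Y. e - S)"
      have "\<forall>e\<in>Y. finite (e - S)"
      proof
        fix e assume "e \<in> Y"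
        hence "e \<in> E" using Y(1) XM ME by blast
        thus "finite (e - S)" using sg_edge[OF sg] by blast
      qed
      hence finW: "finite W" unfolding W_def using finY by (intro finite_UN_I) auto
      have "card W \<le> (\<Sum>e\<in>Y. card (e - S))" unfolding W_def using finY by (rule card_UN_le)
      also have "\<dots> = (\<Sum>e\<in>Y. 1)" by (rule sum.cong) (use Xout Y(1) in blast)+
      also have "\<dots> = card Y" by simp
      finally have cW: "card W \<le> card Y" .
      have "e \<inter> W \<noteq> {}" if eP: "e \<in> P" and eS: "\<not> e \<subseteq> S" for e
      proof -
        obtain w where "w \<in> e" "w \<notin> S" using eS by blast
        hence "w \<in> \<Union>M'" using P(3) \<open>e \<in> P\<close> by blast
        hence "w \<in> \<Union>Y" using N(2) \<open>w \<notin> S\<close> unfolding M'_def by blast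
        thus ?thesis using \<open>w \<in> e\<close> \<open>w \<notin> S\<close> unfolding W_def by blast
      qed
      hence "card P \<le> card N + card W" by (rule Pbound[OF P(1) finW])
      thus False using P(2) cW Y(2) tk by linarith
    qed
    show ?thesis by (rule exI[where x=M'], intro conjI, fact mM', fact cM', fact noP)
  next
    case False
    have "card (M - X) = card M - card X" using XM finX by (simp add: card_Diff_subset)
    hence "k - 1 - card X \<le> card (M - X)" using False cM kn by linarith
    then obtain Y where Y: "Y \<subseteq> M - X" "card Y = k - 1 - card X"
      by (rule obtain_subset_with_card_n)
    define M' where "M' = X \<union> Y"
    have finY: "finite Y" using Y(1) finM finite_subset by blast
    have "X \<inter> Y = {}" using Y(1) by blast
    hence "card M' = card X + card Y" unfolding M'_def using finX finY by (rule card_Un_disjoint[rotated 2])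
    hence cM': "card M' = k - 1" using Y(2) False by linarith
    have M'M: "M' \<subseteq> M" using XM Y(1) unfolding M'_def by blast
    have mM': "matching E M'" using matching_sub[OF M(1)] M'M .
    have noP: "\<not>(\<exists>P. matching E P \<and> card P = k \<and> \<Union>P \<subseteq> S \<union> \<Union>M')"
    proof
      assume "\<exists>P. matching E P \<and> card P = k \<and> \<Union>P \<subseteq> S \<union> \<Union>M'"
      then obtain P where P: "matching E P" "card P = k" "\<Union>P \<subseteq> S \<union> \<Union>M'" by blast
      define R where "R = M - M'"
      have key: "e1 \<inter> e2 = {}" if "e1 \<in> P" "e2 \<in> R" for e1 e2
      proof -
        have "e2 \<notin> X" "e2 \<in> M" "e2 \<notin> M'" using that unfolding R_def M'_def by auto
        hence "e2 \<inter> S = {}" unfolding X_def by auto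
        moreover have "e2 \<inter> \<Union>M' = {}" using Mdis \<open>e2 \<in> M\<close> \<open>e2 \<notin> M'\<close> M'M by blast
        moreover have "e1 \<subseteq> S \<union> \<Union>M'" using P(3) that(1) by blast
        ultimately show ?thesis by blast
      qed
      have PE: "P \<subseteq> E" using P(1) unfolding matching_def by auto
      have disj: "P \<inter> R = {}"
      proof (rule ccontr)
        assume "P \<inter> R \<noteq> {}"
        then obtain e where "e \<in> P" "e \<in> R" by blast
        hence "e \<inter> e = {}" using key by blast
        thus False using sg_edge[OF sg] PE \<open>e \<in> P\<close> by auto
      qed
      have "matching E (P \<union> R)"
        unfolding matching_def
      proof (intro conjI ballI impI)
        show "P \<union> R \<subseteq> E" using PE ME unfolding R_def by auto
        fix e1 e2 assume "e1 \<in> P \<union> R" "e2 \<in> P \<union> R" "e1 \<noteq> e2"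
        note h = this
        have PP: "\<And>a b. a \<in> P \<Longrightarrow> b \<in> P \<Longrightarrow> a \<noteq> b \<Longrightarrow> a \<inter> b = {}"
          using P(1) unfolding matching_def by blast
        have RM: "R \<subseteq> M" unfolding R_def by blast
        show "e1 \<inter> e2 = {}"
        proof (cases "e1 \<in> P")
          case True
          show ?thesis
          proof (cases "e2 \<in> P")
            case True
            show ?thesis using PP[OF \<open>e1 \<in> P\<close> True h(3)] .
          next
            case False
            hence "e2 \<in> R" using h(2) by blast
            with \<open>e1 \<in> P\<close> show ?thesis by (rule key)
          qed
        next
          case False
          hence e1R: "e1 \<in> R" using h(1) by blast
          show ?thesis
          proof (cases "e2 \<in> P")
            case True
            have "e2 \<inter> e1 = {}" using True e1R by (rule key)
            thus ?thesis by (simp add: Int_commute)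
          next
            case False
            hence "e2 \<in> R" using h(2) by blast
            thus ?thesis using e1R RM Mdis h(3) by blast
          qed
        qed
      qed
      hence "card (P \<union> R) \<le> matching_number E" using card_le_nu[OF sg] by blast
      moreover have "card R = card M - (k - 1)" unfolding R_def using M'M finM cM'
        by (simp add: card_Diff_subset finite_subset)
      moreover have "card (P \<union> R) = card P + card R"
        using disj matching_fin[OF sg P(1)] finM unfolding R_def by (simp add: card_Un_disjoint)
      ultimately show False using P(2) cM kn k1 by linarith
    qed
    show ?thesis by (rule exI[where x=M'], intro conjI, fact mM', fact cM', fact noP)
  qed
qed



definition sqm :: "'v set \<Rightarrow> ('v \<Rightarrow>\<^sub>0 nat)" where
  "sqm U = (\<Sum>v\<in>U. Poly_Mapping.single v 1)"

lemma lookup_sqm: "finite U \<Longrightarrow> Poly_Mapping.lookup (sqm U) w = (if w \<in> U then 1 else 0)"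
  unfolding sqm_def by (simp add: lookup_sum lookup_single when_def)

lemma keys_sqm: "finite U \<Longrightarrow> Poly_Mapping.keys (sqm U) = U"
  by (auto simp: in_keys_iff lookup_sqm split: if_splits)

lemma prod_Var: "finite U \<Longrightarrow> (\<Prod>v\<in>U. Var v :: ('v \<Rightarrow>\<^sub>0 nat) \<Rightarrow>\<^sub>0 'k::field) = Poly_Mapping.single (sqm U) 1"
proof (induction U rule: finite_induct)
  case empty
  then show ?case by (simp add: sqm_def)
next
  case (insert x F)
  then show ?case by (simp add: sqm_def Var_def mult_single)
qed

lemma polys_in_add: "p \<in> polys_in V \<Longrightarrow> q \<in> polys_in V \<Longrightarrow> p + q \<in> polys_in V"
  unfolding polys_in_def using keys_add[of p q] by blast

lemma polys_in_zero: "0 \<in> polys_in V"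
  unfolding polys_in_def by simp

lemma polys_in_one: "1 \<in> polys_in V"
  unfolding polys_in_def by simp

lemma polys_in_mult: "p \<in> polys_in V \<Longrightarrow> q \<in> polys_in V \<Longrightarrow> p * q \<in> polys_in V"
  unfolding polys_in_def
proof (intro CollectI ballI)
  fix m assume p: "p \<in> {p. \<forall>m\<in>Poly_Mapping.keys p. Poly_Mapping.keys m \<subseteq> V}" and q: "q \<in> {p. \<forall>m\<in>Poly_Mapping.keys p. Poly_Mapping.keys m \<subseteq> V}"
    and m: "m \<in> Poly_Mapping.keys (p * q)"
  then obtain a b where "a \<in> Poly_Mapping.keys p" "b \<in> Poly_Mapping.keys q" "m = a + b" using keys_mult by blast
  thus "Poly_Mapping.keys m \<subseteq> V" using p q keys_add[of a b] by blast
qed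

lemma polys_in_single: "Poly_Mapping.keys d \<subseteq> V \<Longrightarrow> Poly_Mapping.single d c \<in> polys_in V"
  unfolding polys_in_def by simp

lemma polys_in_sum: "(\<And>a. a \<in> F \<Longrightarrow> f a \<in> polys_in V) \<Longrightarrow> sum f F \<in> polys_in V"
proof (induction F rule: infinite_finite_induct)
  case (infinite A) thus ?case by (simp add: polys_in_zero)
next
  case empty thus ?case by (simp add: polys_in_zero)
next
  case (insert x F) thus ?case by (simp add: polys_in_add)
qed

lemma ideal_zero: "0 \<in> ideal_gen_in V A"
  unfolding ideal_gen_in_def by (rule CollectI, rule exI[of _ "{}"]) simp

lemma ideal_gen: "a \<in> A \<Longrightarrow> r \<in> polys_in V \<Longrightarrow> r * a \<in> ideal_gen_in V A"
  unfolding ideal_gen_in_def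
  by (rule CollectI, rule exI[of _ "{a}"], rule exI[of _ "\<lambda>_. r"]) simp

lemma ideal_add:
  assumes p: "p \<in> ideal_gen_in V A" and q: "q \<in> ideal_gen_in V A"
  shows "p + q \<in> ideal_gen_in V A"
proof -
  obtain F1 r1 where F1: "finite F1" "F1 \<subseteq> A" "\<forall>a\<in>F1. r1 a \<in> polys_in V" "p = (\<Sum>a\<in>F1. r1 a * a)"
    using p unfolding ideal_gen_in_def by blast
  obtain F2 r2 where F2: "finite F2" "F2 \<subseteq> A" "\<forall>a\<in>F2. r2 a \<in> polys_in V" "q = (\<Sum>a\<in>F2. r2 a * a)"
    using q unfolding ideal_gen_in_def by blast
  define s1 where "s1 a = (if a \<in> F1 then r1 a else 0)" for a
  define s2 where "s2 a = (if a \<in> F2 then r2 a else 0)" for a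
  have fin: "finite (F1 \<union> F2)" using F1 F2 by simp
  have e1: "(\<Sum>a\<in>F1 \<union> F2. s1 a * a) = p" unfolding F1(4)
    by (rule sum.mono_neutral_cong_right[OF fin]) (auto simp: s1_def)
  have e2: "(\<Sum>a\<in>F1 \<union> F2. s2 a * a) = q" unfolding F2(4)
    by (rule sum.mono_neutral_cong_right[OF fin]) (auto simp: s2_def)
  have "p + q = (\<Sum>a\<in>F1 \<union> F2. (s1 a + s2 a) * a)"
    using e1 e2 by (simp add: distrib_right sum.distrib)
  moreover have "\<forall>a\<in>F1 \<union> F2. s1 a + s2 a \<in> polys_in V"
    using F1(3) F2(3) by (auto simp: s1_def s2_def polys_in_add polys_in_zero)
  ultimately show ?thesis unfolding ideal_gen_in_def using fin F1(2) F2(2)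
    by (intro CollectI exI[of _ "F1 \<union> F2"] exI[of _ "\<lambda>a. s1 a + s2 a"]) auto
qed

lemma ideal_sum: "(\<And>a. a \<in> F \<Longrightarrow> f a \<in> ideal_gen_in V A) \<Longrightarrow> sum f F \<in> ideal_gen_in V A"
proof (induction F rule: infinite_finite_induct)
  case (infinite A) thus ?case by (simp add: ideal_zero)
next
  case empty thus ?case by (simp add: ideal_zero)
next
  case (insert x F) thus ?case by (simp add: ideal_add)
qed

lemma ideal_sub_polys: "A \<subseteq> polys_in V \<Longrightarrow> ideal_gen_in V A \<subseteq> polys_in V"
  unfolding ideal_gen_in_def
  by (auto intro!: polys_in_sum polys_in_mult)

lemma ideal_mult:
  assumes p: "p \<in> ideal_gen_in V A" and g: "g \<in> polys_in V"
  shows "p * g \<in> ideal_gen_in V A"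
proof -
  obtain F r where F: "finite F" "F \<subseteq> A" "\<forall>a\<in>F. r a \<in> polys_in V" "p = (\<Sum>a\<in>F. r a * a)"
    using p unfolding ideal_gen_in_def by blast
  have "p * g = (\<Sum>a\<in>F. (r a * g) * a)" unfolding F(4) sum_distrib_right
    by (simp add: mult.commute mult.left_commute)
  thus ?thesis using F g unfolding ideal_gen_in_def
    by (intro CollectI exI[of _ F] exI[of _ "\<lambda>a. r a * g"]) (auto intro: polys_in_mult)
qed

lemma decomp: "f = (\<Sum>x\<in>Poly_Mapping.keys f. Poly_Mapping.single x (Poly_Mapping.lookup f x))"
  by (rule poly_mapping_eqI) (simp add: lookup_sum lookup_single when_def in_keys_iff)

lemma lookup_mult_mono:
  "Poly_Mapping.lookup (f * Poly_Mapping.single m (1::'b::comm_semiring_1)) (x + (m::'a::cancel_comm_monoid_add)) = Poly_Mapping.lookup f x"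
proof -
  have "f * Poly_Mapping.single m 1 = (\<Sum>y\<in>Poly_Mapping.keys f. Poly_Mapping.single (y + m) (Poly_Mapping.lookup f y))"
    by (subst decomp[of f]) (simp add: sum_distrib_right mult_single)
  hence "Poly_Mapping.lookup (f * Poly_Mapping.single m 1) (x + m) = (\<Sum>y\<in>Poly_Mapping.keys f. if y = x then Poly_Mapping.lookup f y else 0)"
    by (simp add: lookup_sum lookup_single when_def)
  thus ?thesis by (simp add: in_keys_iff)
qed

lemma K1:
  assumes p: "p \<in> ideal_gen_in V {Poly_Mapping.single (h M) (1::'k::field) | M. Q M}"
    and x: "x \<in> Poly_Mapping.keys p"
  shows "\<exists>M d. Q M \<and> x = d + h M"
proof -
  obtain F r where F: "finite F" "F \<subseteq> {Poly_Mapping.single (h M) 1 | M. Q M}" "p = (\<Sum>a\<in>F. r a * a)"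
    using p unfolding ideal_gen_in_def by blast
  have "\<exists>a\<in>F. x \<in> Poly_Mapping.keys (r a * a)"
  proof (rule ccontr)
    assume "\<not> ?thesis"
    hence "Poly_Mapping.lookup p x = 0" unfolding F(3) by (simp add: lookup_sum in_keys_iff)
    thus False using x by (simp add: in_keys_iff)
  qed
  then obtain a where "a \<in> F" "x \<in> Poly_Mapping.keys (r a * a)" by blast
  moreover obtain M where "Q M" "a = Poly_Mapping.single (h M) 1" using F(2) \<open>a \<in> F\<close> by blast
  ultimately have "x \<in> Poly_Mapping.keys (r a * Poly_Mapping.single (h M) 1)" by simp
  then obtain b c where "b \<in> Poly_Mapping.keys (r a)" "c \<in> Poly_Mapping.keys (Poly_Mapping.single (h M) (1::'k))" "x = b + c"
    using keys_mult by blast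
  thus ?thesis using \<open>Q M\<close> by auto
qed

lemma keys_le_add: "Poly_Mapping.keys (d::'a \<Rightarrow>\<^sub>0 nat) \<subseteq> Poly_Mapping.keys (d + e)"
  by (auto simp: in_keys_iff lookup_add)

lemma K2:
  assumes f: "f \<in> polys_in V"
    and dv: "\<And>x. x \<in> Poly_Mapping.keys f \<Longrightarrow> \<exists>M d. Q M \<and> x = d + h M"
  shows "f \<in> ideal_gen_in V {Poly_Mapping.single (h M) (1::'k::field) | M. Q M}"
proof -
  have "Poly_Mapping.single x (Poly_Mapping.lookup f x) \<in> ideal_gen_in V {Poly_Mapping.single (h M) (1::'k::field) | M. Q M}"
    if x: "x \<in> Poly_Mapping.keys f" for x
  proof -
    obtain M d where Md: "Q M" "x = d + h M" using dv x by blast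
    have "Poly_Mapping.keys d \<subseteq> V" using f x keys_le_add[of d "h M"] Md(2) unfolding polys_in_def by blast
    hence "Poly_Mapping.single d (Poly_Mapping.lookup f x) \<in> polys_in V" by (rule polys_in_single)
    moreover have "Poly_Mapping.single x (Poly_Mapping.lookup f x) = Poly_Mapping.single d (Poly_Mapping.lookup f x) * Poly_Mapping.single (h M) 1"
      using Md(2) by (simp add: mult_single)
    ultimately show ?thesis using Md(1) by (auto intro!: ideal_gen)
  qed
  hence "(\<Sum>x\<in>Poly_Mapping.keys f. Poly_Mapping.single x (Poly_Mapping.lookup f x)) \<in> ideal_gen_in V {Poly_Mapping.single (h M) (1::'k::field) | M. Q M}"
    by (rule ideal_sum)
  thus ?thesis using decomp[of f] by simp
qed

lemma UM_props: "simple_graph V E \<Longrightarrow> matching E M \<Longrightarrow> finite (\<Union>M) \<and> \<Union>M \<subseteq> V"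
proof -
  assume sg: "simple_graph V E" and m: "matching E M"
  have ME: "M \<subseteq> E" using m unfolding matching_def by blast
  have "finite M" using matching_fin[OF sg m] .
  moreover have "\<forall>e\<in>M. finite e \<and> e \<subseteq> V" using ME sg_edge[OF sg] by blast
  ultimately show ?thesis by blast
qed

lemma gen_eq:
  assumes sg: "simple_graph V E" and m: "matching E M"
  shows "(\<Prod>e\<in>M. edge_mono e :: ('v \<Rightarrow>\<^sub>0 nat) \<Rightarrow>\<^sub>0 'k::field) = Poly_Mapping.single (sqm (\<Union>M)) 1"
proof -
  have ME: "M \<subseteq> E" using m unfolding matching_def by blast
  have fe: "\<forall>e\<in>M. finite e" using ME sg_edge[OF sg] by blast
  have dis: "\<forall>A\<in>M. \<forall>B\<in>M. A \<noteq> B \<longrightarrow> A \<inter> B = {}" using m unfolding matching_def by blast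
  have "(\<Prod>v\<in>\<Union>M. Var v :: ('v \<Rightarrow>\<^sub>0 nat) \<Rightarrow>\<^sub>0 'k::field) = (\<Prod>e\<in>M. \<Prod>v\<in>e. Var v)"
    using prod.Union_disjoint[OF fe dis, of Var] by simp
  moreover have "(\<Prod>v\<in>\<Union>M. Var v :: ('v \<Rightarrow>\<^sub>0 nat) \<Rightarrow>\<^sub>0 'k::field) = Poly_Mapping.single (sqm (\<Union>M)) 1"
    using UM_props[OF sg m] by (simp add: prod_Var)
  ultimately show ?thesis unfolding edge_mono_def by simp
qed

lemma sq_power_eq:
  assumes sg: "simple_graph V E"
  shows "(sq_power V E j :: (('v \<Rightarrow>\<^sub>0 nat) \<Rightarrow>\<^sub>0 'k::field) set)
       = ideal_gen_in V {Poly_Mapping.single (sqm (\<Union>M)) 1 | M. matching E M \<and> card M = j}"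
proof -
  have "{(\<Prod>e\<in>M. edge_mono e :: ('v \<Rightarrow>\<^sub>0 nat) \<Rightarrow>\<^sub>0 'k::field) | M. matching E M \<and> card M = j}
      = {Poly_Mapping.single (sqm (\<Union>M)) 1 | M. matching E M \<and> card M = j}"
    using gen_eq[OF sg] by metis
  thus ?thesis unfolding sq_power_def by simp
qed

lemma gens_polys:
  assumes sg: "simple_graph V E"
  shows "{Poly_Mapping.single (sqm (\<Union>M)) (1::'k::field) | M. matching E M \<and> card M = j} \<subseteq> polys_in V"
proof
  fix a assume "a \<in> {Poly_Mapping.single (sqm (\<Union>M)) (1::'k::field) | M. matching E M \<and> card M = j}"
  then obtain M where M: "matching E M" "a = Poly_Mapping.single (sqm (\<Union>M)) 1" by blast
  have "Poly_Mapping.keys (sqm (\<Union>M)) \<subseteq> V" using UM_props[OF sg M(1)] keys_sqm by metis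
  thus "a \<in> polys_in V" unfolding M(2) by (rule polys_in_single)
qed

theorem theorem6p5:
  fixes V :: "'v set" and E :: "'v set set" and k :: nat
  assumes "simple_graph V E"
    and "equimatchable E"
    and "1 < k" and "k \<le> matching_number E"
  shows "colon_in V (sq_power V E k :: (('v \<Rightarrow>\<^sub>0 nat) \<Rightarrow>\<^sub>0 'k::field) set) (sq_power V E (k - 1))
         = sq_power V E k"
proof -
  note sg = assms(1)
  define G where "G j = {Poly_Mapping.single (sqm (\<Union>M)) (1::'k) | M. matching E M \<and> card M = j}" for j
  have SP: "sq_power V E j = ideal_gen_in V (G j)" for j
    unfolding G_def by (rule sq_power_eq[OF sg])
  have Gp: "G j \<subseteq> polys_in V" for j unfolding G_def by (rule gens_polys[OF sg])
  have Ip: "ideal_gen_in V (G j) \<subseteq> polys_in V" for j by (rule ideal_sub_polys[OF Gp])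
  show ?thesis unfolding SP
  proof (rule set_eqI, rule iffI)
    fix f assume "f \<in> ideal_gen_in V (G k)"
    thus "f \<in> colon_in V (ideal_gen_in V (G k)) (ideal_gen_in V (G (k - 1)))"
      unfolding colon_in_def using Ip ideal_mult by blast
  next
    fix f assume "f \<in> colon_in V (ideal_gen_in V (G k)) (ideal_gen_in V (G (k - 1)))"
    hence fp: "f \<in> polys_in V" and fc: "\<And>g. g \<in> ideal_gen_in V (G (k - 1)) \<Longrightarrow> f * g \<in> ideal_gen_in V (G k)"
      unfolding colon_in_def by auto
    show "f \<in> ideal_gen_in V (G k)" unfolding G_def
    proof (rule K2[OF fp])
      fix x assume x: "x \<in> Poly_Mapping.keys f"
      have "\<exists>Q. matching E Q \<and> card Q = k \<and> \<Union>Q \<subseteq> Poly_Mapping.keys x"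
      proof (rule ccontr)
        assume noQ: "\<not> ?thesis"
        obtain M' where M': "matching E M'" "card M' = k - 1"
          and noP: "\<not>(\<exists>P. matching E P \<and> card P = k \<and> \<Union>P \<subseteq> Poly_Mapping.keys x \<union> \<Union>M')"
          using comb[OF sg assms(2) assms(3) assms(4) noQ] by blast
        define g0 where "g0 = Poly_Mapping.single (sqm (\<Union>M')) (1::'k)"
        have "g0 \<in> G (k - 1)" unfolding G_def g0_def using M' by blast
        hence "1 * g0 \<in> ideal_gen_in V (G (k - 1))" by (rule ideal_gen) (rule polys_in_one)
        hence "f * g0 \<in> ideal_gen_in V (G k)" using fc by simp
        moreover have "x + sqm (\<Union>M') \<in> Poly_Mapping.keys (f * g0)"
          using x unfolding g0_def by (simp add: in_keys_iff lookup_mult_mono)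
        ultimately obtain P d where P: "matching E P \<and> card P = k" "x + sqm (\<Union>M') = d + sqm (\<Union>P)"
          unfolding G_def using K1[where h="\<lambda>M. sqm (\<Union>M)" and Q="\<lambda>M. matching E M \<and> card M = k"] by blast
        have "\<Union>P \<subseteq> Poly_Mapping.keys x \<union> \<Union>M'"
        proof
          fix w assume w: "w \<in> \<Union>P"
          have "Poly_Mapping.lookup (x + sqm (\<Union>M')) w = Poly_Mapping.lookup (d + sqm (\<Union>P)) w"
            using P(2) by simp
          hence "Poly_Mapping.lookup x w + (if w \<in> \<Union>M' then 1 else 0) = Poly_Mapping.lookup d w + 1"
            using w UM_props[OF sg] P(1) M'(1) by (simp add: lookup_add lookup_sqm)
          thus "w \<in> Poly_Mapping.keys x \<union> \<Union>M'" by (auto simp: in_keys_iff split: if_splits)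
        qed
        thus False using noP P(1) by blast
      qed
      then obtain Q where Q: "matching E Q" "card Q = k" "\<Union>Q \<subseteq> Poly_Mapping.keys x" by blast
      have fQ: "finite (\<Union>Q)" using UM_props[OF sg Q(1)] by blast
      have "x = (x - sqm (\<Union>Q)) + sqm (\<Union>Q)"
      proof (rule poly_mapping_eqI)
        fix w
        show "Poly_Mapping.lookup x w = Poly_Mapping.lookup (x - sqm (\<Union>Q) + sqm (\<Union>Q)) w"
          using Q(3) fQ by (auto simp: lookup_add lookup_minus lookup_sqm in_keys_iff)
      qed
      thus "\<exists>M d. (matching E M \<and> card M = k) \<and> x = d + sqm (\<Union>M)" using Q by blast
    qed
  qed
qed

end
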